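(* Let $\mathcal{A}$ and $\mathcal{B}$ be two stochastic CA with the same set of states $Q$ (and possibly different random alphabets) and explicit global functions $F$ and $G$. If $S_F=S_G$ then $S_F^t=S_G^t$ for all $t\ge1$.
   Context: A stochastic CA is $(Q,R,V,V',f)$ with $Q$ finite states, $R$ finite random symbols, $V=\{v_1,\dots,v_r\}$, $V'=\{v'_1,\dots,v'_{r'}\}$ finite subsets of $\mathbb{Z}$, $f:Q^r\times R^{r'}\to Q$; explicit global function $F(c,s)_z=f((c_{z+v_1},\dots,c_{z+v_r}),(s_{z+v'_1},\dots,s_{z+v'_{r'}}))$. Iterates: $F^0(c)=c$, $F^{t+1}(c,s^1,\dots,s^{t+1})=F(F^t(c,s^1,\dots,s^t),s^{t+1})$. $\nu_R$ is the uniform Bernoulli measure on $R^{\mathbb{Z}}$ and $\nu_{R^t}$ the uniform (product) measure on $(R^{\mathbb{Z}})^t$. For cylinders $[u]_z=\{c:c_{z+x}=u_x,0\le x<|u|\}$: $S_F(c)([u]_z)=\nu_R\{s:F(c,s)\in[u]_z\}$ and $S_F^t(c)([u]_z)=\nu_{R^t}\{(s^1,\dots,s^t): F^t(c,s^1,\dots,s^t)\in[u]_z\}$, which determine Borel probability measures on $Q^{\mathbb{Z}}$. *)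

theory Defs
  imports "HOL-Probability.Probability"
begin

text \<open>A stochastic CA (Q,R,V,V',f) is given by finite types 'q, 'r, neighbourhood
  lists V = [v_1,...,v_r], V' = [v'_1,...,v'_r'] and a local rule f, applied to
  the lists of neighbour states and neighbour random symbols.\<close>

definition globalF :: "int list \<Rightarrow> int list \<Rightarrow> ('q list \<Rightarrow> 'r list \<Rightarrow> 'q)
    \<Rightarrow> (int \<Rightarrow> 'q) \<Rightarrow> (int \<Rightarrow> 'r) \<Rightarrow> (int \<Rightarrow> 'q)" where
  "globalF V V' f c s = (\<lambda>z. f (map (\<lambda>v. c (z + v)) V) (map (\<lambda>v. s (z + v)) V'))"

definition bern :: "(int \<Rightarrow> 'r::finite) measure" where
  "bern = PiM (UNIV :: int set) (\<lambda>_. measure_pmf (pmf_of_set (UNIV :: 'r set)))"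

primrec iterF :: "((int \<Rightarrow> 'q) \<Rightarrow> (int \<Rightarrow> 'r) \<Rightarrow> (int \<Rightarrow> 'q)) \<Rightarrow> nat
    \<Rightarrow> (int \<Rightarrow> 'q) \<Rightarrow> (nat \<Rightarrow> int \<Rightarrow> 'r) \<Rightarrow> (int \<Rightarrow> 'q)" where
  "iterF F 0 c ss = c"
| "iterF F (Suc t) c ss = F (iterF F t c ss) (ss (Suc t))"

definition cyl :: "'q list \<Rightarrow> int \<Rightarrow> (int \<Rightarrow> 'q) set" where
  "cyl u z = {c. \<forall>x < length u. c (z + int x) = u ! x}"

definition SF :: "((int \<Rightarrow> 'q) \<Rightarrow> (int \<Rightarrow> 'r::finite) \<Rightarrow> (int \<Rightarrow> 'q))
    \<Rightarrow> (int \<Rightarrow> 'q) \<Rightarrow> (int \<Rightarrow> 'q) set \<Rightarrow> real" where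
  "SF F c A = measure bern {s \<in> space bern. F c s \<in> A}"

definition SFt :: "((int \<Rightarrow> 'q) \<Rightarrow> (int \<Rightarrow> 'r::finite) \<Rightarrow> (int \<Rightarrow> 'q)) \<Rightarrow> nat
    \<Rightarrow> (int \<Rightarrow> 'q) \<Rightarrow> (int \<Rightarrow> 'q) set \<Rightarrow> real" where
  "SFt F t c A = measure (PiM {1..t} (\<lambda>_. bern))
     {ss \<in> space (PiM {1..t} (\<lambda>_. (bern :: (int \<Rightarrow> 'r) measure))). iterF F t c ss \<in> A}"

end

theory Submission
  imports Defs
begin

lemma prob_bern: "prob_space (bern :: (int \<Rightarrow> 'r::finite) measure)"
  unfolding bern_def by (rule prob_space_PiM) (simp add: prob_space_measure_pmf)

lemma space_bern: "space (bern :: (int \<Rightarrow> 'r::finite) measure) = UNIV"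
  unfolding bern_def by (simp add: space_PiM)

lemma coord_bern: "(\<lambda>s. s x) \<in> measurable (bern :: (int \<Rightarrow> 'r::finite) measure) (count_space UNIV)"
proof -
  have "(\<lambda>s. s x) \<in> measurable (bern :: (int \<Rightarrow> 'r::finite) measure) (measure_pmf (pmf_of_set UNIV))"
    unfolding bern_def by (rule measurable_component_singleton) simp
  then show ?thesis by (simp add: measurable_cong_sets[OF refl sets_measure_pmf_count_space])
qed

lemma meas_map:
  assumes "\<And>x. (\<lambda>\<omega>. C \<omega> x) \<in> measurable M (count_space (UNIV :: 'q::countable set))"
  shows "(\<lambda>\<omega>. map (\<lambda>k. C \<omega> (p k)) xs) \<in> measurable M (count_space UNIV)"
proof (induction xs)
  case Nil then show ?case by simp
next
  case (Cons a xs)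
  have "(\<lambda>\<omega>. (\<lambda>h. (\<lambda>l. h # l) (map (\<lambda>k. C \<omega> (p k)) xs)) (C \<omega> (p a))) \<in> measurable M (count_space UNIV)"
    apply (rule measurable_compose_countable[OF _ assms])
    apply (rule measurable_compose_countable[OF _ Cons.IH])
    by simp
  then show ?case by simp
qed

lemma meas_global:
  assumes "\<And>x. (\<lambda>\<omega>. C \<omega> x) \<in> measurable M (count_space (UNIV :: 'q::countable set))"
    and "\<And>x. (\<lambda>\<omega>. S \<omega> x) \<in> measurable M (count_space (UNIV :: 'r::countable set))"
  shows "(\<lambda>\<omega>. globalF V V' f (C \<omega>) (S \<omega>) x) \<in> measurable M (count_space UNIV)"
proof -
  have "(\<lambda>\<omega>. (\<lambda>a. (\<lambda>b. f a b) (map (\<lambda>v. S \<omega> (x + v)) V')) (map (\<lambda>v. C \<omega> (x + v)) V)) \<in> measurable M (count_space UNIV)"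
    apply (rule measurable_compose_countable[OF _ meas_map[OF assms(1)]])
    apply (rule measurable_compose_countable[OF _ meas_map[OF assms(2)]])
    by simp
  then show ?thesis by (simp add: globalF_def)
qed

lemma meas_coord:
  assumes "k \<in> I"
  shows "(\<lambda>ss. ss k x) \<in> measurable (PiM I (\<lambda>_. (bern :: (int \<Rightarrow> 'r::finite) measure))) (count_space UNIV)"
proof -
  have 1: "(\<lambda>ss. ss k) \<in> measurable (PiM I (\<lambda>_. (bern :: (int \<Rightarrow> 'r::finite) measure))) bern"
    using assms by (rule measurable_component_singleton)
  have 2: "(\<lambda>s. s x) \<in> measurable (bern :: (int \<Rightarrow> 'r::finite) measure) (count_space UNIV)"
    by (rule coord_bern)
  show ?thesis using measurable_comp[OF 1 2] by (simp add: o_def)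
qed

lemma meas_iter:
  "t \<le> T \<Longrightarrow> (\<lambda>ss. iterF (globalF V V' f) t c ss x) \<in> measurable (PiM {1..T} (\<lambda>_. (bern :: (int \<Rightarrow> 'r::finite) measure))) (count_space (UNIV :: 'q::finite set))"
proof (induction t arbitrary: x)
  case 0 then show ?case by simp
next
  case (Suc t)
  have "(\<lambda>ss. globalF V V' f (iterF (globalF V V' f) t c ss) (ss (Suc t)) x) \<in> measurable (PiM {1..T} (\<lambda>_. (bern :: (int \<Rightarrow> 'r::finite) measure))) (count_space (UNIV :: 'q::finite set))"
  proof (rule meas_global[where C="\<lambda>ss. iterF (globalF V V' f) t c ss" and S="\<lambda>ss. ss (Suc t)"])
    fix y show "(\<lambda>ss. iterF (globalF V V' f) t c ss y) \<in> measurable (PiM {1..T} (\<lambda>_. (bern :: (int \<Rightarrow> 'r::finite) measure))) (count_space (UNIV :: 'q::finite set))"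
      using Suc by simp
    show "(\<lambda>ss. ss (Suc t) y) \<in> measurable (PiM {1..T} (\<lambda>_. (bern :: (int \<Rightarrow> 'r::finite) measure))) (count_space UNIV)"
      using Suc.prems by (intro meas_coord) simp
  qed
  then show ?case by simp
qed

lemma meas_bern_single:
  "(\<lambda>s. globalF V V' f (d :: int \<Rightarrow> 'q::finite) s x) \<in> measurable (bern :: (int \<Rightarrow> 'r::finite) measure) (count_space UNIV)"
proof -
  have 2: "\<And>x. (\<lambda>s. s x) \<in> measurable (bern :: (int \<Rightarrow> 'r::finite) measure) (count_space UNIV)"
    by (rule coord_bern)
  show ?thesis by (rule meas_global[OF _ 2]) simp
qed

lemma cyl_map: "c \<in> cyl u z \<longleftrightarrow> map (\<lambda>k. c (z + int k)) [0..<length u] = u"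
  unfolding cyl_def list_eq_iff_nth_eq by simp

lemma sets_cyl:
  assumes "\<And>x. (\<lambda>\<omega>. g \<omega> x) \<in> measurable M (count_space (UNIV :: 'q::countable set))"
  shows "{\<omega> \<in> space M. g \<omega> \<in> cyl u z} \<in> sets M"
proof -
  have "{\<omega> \<in> space M. g \<omega> \<in> cyl u z} = (\<lambda>\<omega>. map (\<lambda>k. g \<omega> (z + int k)) [0..<length u]) -` {u} \<inter> space M"
    by (auto simp: cyl_map)
  also have "\<dots> \<in> sets M" by (rule measurable_sets[OF meas_map[OF assms]]) simp
  finally show ?thesis .
qed


lemma iter_upd: "T < k \<Longrightarrow> iterF F T c (ss(k := y)) = iterF F T c ss"
  by (induction T) auto

lemma SFt0: "SFt (F :: _ \<Rightarrow> (int \<Rightarrow> 'r::finite) \<Rightarrow> _) 0 c A = (if c \<in> A then 1 else 0)"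
proof -
  have PS: "prob_space (PiM {} (\<lambda>_::nat. (bern :: (int \<Rightarrow> 'r) measure)))"
    by (rule prob_space_PiM) (rule prob_bern)
  show ?thesis unfolding SFt_def by (cases "c \<in> A") (simp_all add: prob_space.prob_space[OF PS])
qed

lemma step:
  fixes V V' :: "int list" and f :: "'q::finite list \<Rightarrow> 'r::finite list \<Rightarrow> 'q"
  assumes hloc: "\<And>d. SF (globalF V V' f) d (cyl u z) = \<phi> (map (\<lambda>k. d (a + int k)) [0..<n])"
    and phi_nn: "\<And>w. \<phi> w \<ge> 0"
  shows "SFt (globalF V V' f) (Suc t) c (cyl u z)
     = (\<Sum>w\<in>{w. length w = n}. \<phi> w * SFt (globalF V V' f) t c (cyl w a))"
proof -
  let ?F = "globalF V V' f"
  let ?P = "\<lambda>T. PiM {1..T} (\<lambda>_. (bern :: (int \<Rightarrow> 'r) measure))"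
  let ?W = "{w::'q list. length w = n}"
  let ?win = "\<lambda>d::int \<Rightarrow> 'q. map (\<lambda>k. d (a + int k)) [0..<n]"
  interpret PP: product_prob_space "\<lambda>_::nat. bern :: (int \<Rightarrow> 'r) measure" UNIV
    by (simp add: product_prob_space_def product_sigma_finite_def prob_bern
        prob_space_imp_sigma_finite product_prob_space_axioms_def)
  have PS: "\<And>T. prob_space (?P T)" by (rule prob_space_PiM) (rule prob_bern)
  have fin_PS: "\<And>T. finite_measure (?P T)" using PS unfolding prob_space_def by blast
  have fin_bern: "finite_measure (bern :: (int \<Rightarrow> 'r) measure)" using prob_bern by (simp add: prob_space_def)
  have finW: "finite ?W" using finite_lists_length_eq[of "UNIV::'q set" n] by simp
  have ins: "{1..Suc t} = insert (Suc t) {1..t}" by auto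
  define E where "E = {ss \<in> space (?P (Suc t)). iterF ?F (Suc t) c ss \<in> cyl u z}"
  have Esets: "E \<in> sets (?P (Suc t))" unfolding E_def by (rule sets_cyl, rule meas_iter) simp
  define A where "A w = {ss \<in> space (?P t). iterF ?F t c ss \<in> cyl w a}" for w
  have Asets: "A w \<in> sets (?P t)" for w unfolding A_def by (rule sets_cyl, rule meas_iter) simp
  have "emeasure (?P (Suc t)) E = (\<integral>\<^sup>+ ss. indicator E ss \<partial>?P (Suc t))"
    by (rule nn_integral_indicator[symmetric, OF Esets])
  also have "\<dots> = (\<integral>\<^sup>+ x. (\<integral>\<^sup>+ y. indicator E (x(Suc t := y)) \<partial>bern) \<partial>?P t)"
  proof -
    have m: "indicator E \<in> borel_measurable (PiM (insert (Suc t) {1..t}) (\<lambda>_. (bern :: (int \<Rightarrow> 'r) measure)))"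
      using Esets unfolding ins by (rule borel_measurable_indicator)
    have "finite {1..t}" "Suc t \<notin> {1..t}" by auto
    note PP.product_nn_integral_insert[OF this m]
    then show ?thesis by (simp only: ins)
  qed
  also have "\<dots> = (\<integral>\<^sup>+ x. ennreal (\<phi> (?win (iterF ?F t c x))) \<partial>?P t)"
  proof (rule nn_integral_cong)
    fix x assume x: "x \<in> space (?P t)"
    let ?Bx = "{s \<in> space bern. ?F (iterF ?F t c x) s \<in> cyl u z}"
    have ind: "indicator E (x(Suc t := y)) = indicator ?Bx y" for y
    proof -
      have "x(Suc t := y) \<in> space (?P (Suc t))"
        using x by (auto simp: space_PiM PiE_iff extensional_def space_bern)
      moreover have "iterF ?F (Suc t) c (x(Suc t := y)) = ?F (iterF ?F t c x) y"
        by (simp add: iter_upd)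
      ultimately show ?thesis by (simp add: E_def indicator_def space_bern)
    qed
    have "(\<integral>\<^sup>+ y. indicator E (x(Suc t := y)) \<partial>bern) = (\<integral>\<^sup>+ y. indicator ?Bx y \<partial>bern)"
      by (rule nn_integral_cong) (rule ind)
    also have "\<dots> = emeasure bern ?Bx"
      by (intro nn_integral_indicator sets_cyl meas_bern_single)
    also have "\<dots> = ennreal (SF ?F (iterF ?F t c x) (cyl u z))"
      unfolding SF_def by (rule finite_measure.emeasure_eq_measure[OF fin_bern])
    finally show "(\<integral>\<^sup>+ y. indicator E (x(Suc t := y)) \<partial>bern) = ennreal (\<phi> (?win (iterF ?F t c x)))"
      by (simp add: hloc)
  qed
  also have "\<dots> = (\<integral>\<^sup>+ x. (\<Sum>w\<in>?W. ennreal (\<phi> w) * indicator (A w) x) \<partial>?P t)"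
  proof (rule nn_integral_cong)
    fix x assume x: "x \<in> space (?P t)"
    let ?w0 = "?win (iterF ?F t c x)"
    have "(\<Sum>w\<in>?W. ennreal (\<phi> w) * indicator (A w) x) = (\<Sum>w\<in>?W. if w = ?w0 then ennreal (\<phi> w) else 0)"
    proof (rule sum.cong)
      fix w assume "w \<in> ?W"
      then have "x \<in> A w \<longleftrightarrow> w = ?w0" using x by (auto simp: A_def cyl_map)
      then show "ennreal (\<phi> w) * indicator (A w) x = (if w = ?w0 then ennreal (\<phi> w) else 0)"
        by (simp add: indicator_def)
    qed simp
    also have "\<dots> = ennreal (\<phi> ?w0)" using finW by (simp add: sum.delta)
    finally show "ennreal (\<phi> ?w0) = (\<Sum>w\<in>?W. ennreal (\<phi> w) * indicator (A w) x)" by simp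
  qed
  also have "\<dots> = (\<Sum>w\<in>?W. (\<integral>\<^sup>+ x. ennreal (\<phi> w) * indicator (A w) x \<partial>?P t))"
    by (rule nn_integral_sum) (intro borel_measurable_times_ennreal borel_measurable_const borel_measurable_indicator Asets)
  also have "\<dots> = (\<Sum>w\<in>?W. ennreal (\<phi> w) * emeasure (?P t) (A w))"
    by (rule sum.cong[OF refl], rule nn_integral_cmult_indicator[OF Asets])
  also have "\<dots> = (\<Sum>w\<in>?W. ennreal (\<phi> w * SFt ?F t c (cyl w a)))"
    by (rule sum.cong[OF refl]) (simp only: finite_measure.emeasure_eq_measure[OF fin_PS] ennreal_mult[OF phi_nn measure_nonneg] SFt_def A_def)
  also have "\<dots> = ennreal (\<Sum>w\<in>?W. \<phi> w * SFt ?F t c (cyl w a))"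
    by (rule sum_ennreal) (simp add: phi_nn SFt_def)
  finally have eq: "emeasure (?P (Suc t)) E = ennreal (\<Sum>w\<in>?W. \<phi> w * SFt ?F t c (cyl w a))" .
  have nn: "0 \<le> (\<Sum>w\<in>?W. \<phi> w * SFt ?F t c (cyl w a))"
    by (intro sum_nonneg mult_nonneg_nonneg phi_nn) (simp add: SFt_def)
  have "SFt ?F (Suc t) c (cyl u z) = measure (?P (Suc t)) E" by (simp add: SFt_def E_def)
  also have "\<dots> = (\<Sum>w\<in>?W. \<phi> w * SFt ?F t c (cyl w a))"
    using eq nn by (simp add: measure_def)
  finally show ?thesis .
qed

lemma loc:
  fixes V V' :: "int list" and f :: "'q::finite list \<Rightarrow> 'r::finite list \<Rightarrow> 'q"
  assumes agree: "\<And>p. a \<le> p \<Longrightarrow> p < a + int n \<Longrightarrow> d p = d' p"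
    and bd: "\<forall>v\<in>set V. \<bar>v\<bar> \<le> m" and m: "m \<ge> 0"
    and a: "a = z - m" and n: "n = length u + 2 * nat m"
  shows "SF (globalF V V' f) d (cyl u z) = SF (globalF V V' f) d' (cyl u z)"
proof -
  have "globalF V V' f d s \<in> cyl u z \<longleftrightarrow> globalF V V' f d' s \<in> cyl u z" for s
  proof -
    have eq: "map (\<lambda>v. d (z + int x + v)) V = map (\<lambda>v. d' (z + int x + v)) V" if "x < length u" for x
    proof (rule map_cong[OF refl])
      fix v assume "v \<in> set V"
      then have "\<bar>v\<bar> \<le> m" using bd by auto
      then show "d (z + int x + v) = d' (z + int x + v)"
        using that m by (intro agree) (auto simp: a n)
    qed
    show ?thesis unfolding cyl_def globalF_def
      by (auto simp del: map_eq_conv simp add: eq)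
  qed
  then show ?thesis unfolding SF_def by simp
qed

theorem fact1:
  fixes V V' W W' :: "int list"
    and f :: "'q::finite list \<Rightarrow> 'r::finite list \<Rightarrow> 'q"
    and g :: "'q list \<Rightarrow> 'r2::finite list \<Rightarrow> 'q"
  assumes "\<forall>c u z. SF (globalF V V' f) c (cyl u z) = SF (globalF W W' g) c (cyl u z)"
  shows "\<forall>t\<ge>1. \<forall>c u z. SFt (globalF V V' f) t c (cyl u z) = SFt (globalF W W' g) t c (cyl u z)"
proof -
  have key: "\<forall>c u z. SFt (globalF V V' f) t c (cyl u z) = SFt (globalF W W' g) t c (cyl u z)" for t
  proof (induction t)
    case 0 then show ?case by (simp add: SFt0)
  next
    case (Suc t)
    show ?case
    proof (intro allI)
      fix c and u :: "'q list" and z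
      define m where "m = Max (insert 0 (abs ` set V))"
      have m0: "m \<ge> 0" unfolding m_def by simp
      have bd: "\<forall>v\<in>set V. \<bar>v\<bar> \<le> m" unfolding m_def by simp
      define a where "a = z - m"
      define n where "n = length u + 2 * nat m"
      define dw where "dw w = (\<lambda>p. (w::'q list) ! nat (p - a))" for w
      define \<phi> where "\<phi> w = SF (globalF V V' f) (dw w) (cyl u z)" for w
      have hF: "SF (globalF V V' f) d (cyl u z) = \<phi> (map (\<lambda>k. d (a + int k)) [0..<n])" for d
        unfolding \<phi>_def
      proof (rule loc[OF _ bd m0 a_def n_def])
        fix p assume "a \<le> p" "p < a + int n"
        moreover from this have "nat (p - a) < n" by linarith
        ultimately show "d p = dw (map (\<lambda>k. d (a + int k)) [0..<n]) p"
          by (simp add: dw_def)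
      qed
      have hG: "SF (globalF W W' g) d (cyl u z) = \<phi> (map (\<lambda>k. d (a + int k)) [0..<n])" for d
      proof -
        have "SF (globalF W W' g) d (cyl u z) = SF (globalF V V' f) d (cyl u z)" using assms by simp
        then show ?thesis by (simp only: hF)
      qed
      have nn: "\<phi> w \<ge> 0" for w by (simp add: \<phi>_def SF_def)
      have "SFt (globalF V V' f) (Suc t) c (cyl u z) = (\<Sum>w\<in>{w. length w = n}. \<phi> w * SFt (globalF V V' f) t c (cyl w a))"
        by (rule step[OF hF nn])
      also have "\<dots> = (\<Sum>w\<in>{w. length w = n}. \<phi> w * SFt (globalF W W' g) t c (cyl w a))"
        using Suc.IH by simp
      also have "\<dots> = SFt (globalF W W' g) (Suc t) c (cyl u z)"
        by (rule step[OF hG nn, symmetric])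
      finally show "SFt (globalF V V' f) (Suc t) c (cyl u z) = SFt (globalF W W' g) (Suc t) c (cyl u z)" .
    qed
  qed
  show ?thesis
  proof (intro allI impI)
    fix t :: nat and c and u :: "'q list" and z
    show "SFt (globalF V V' f) t c (cyl u z) = SFt (globalF W W' g) t c (cyl u z)"
      by (rule key[of t, rule_format])
  qed
qed

end
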